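(* Let $A=[a_{ij}]\in\mathfrak{B}_{n\times m}$ be a semi-canonical matrix. Then there exist integers $i,j$ with $0\le i\le n$ and $0\le j\le m$ such that $a_{11}=a_{12}=\cdots=a_{1j}=0$ and $a_{1,j+1}=a_{1,j+2}=\cdots=a_{1m}=1$, and $a_{11}=a_{21}=\cdots=a_{i1}=0$ and $a_{i+1,1}=a_{i+2,1}=\cdots=a_{n1}=1$.
   Context: $\mathfrak{B}_{n\times m}$ denotes the set of all $n\times m$ matrices with entries in $\{0,1\}$. For $A=[a_{ij}]\in\mathfrak{B}_{n\times m}$, $r(A)=\langle x_1,\dots,x_n\rangle$ with $x_i=\sum_{j=1}^m a_{ij}2^{m-j}$ and $c(A)=\langle y_1,\dots,y_m\rangle$ with $y_j=\sum_{i=1}^n a_{ij}2^{n-i}$. $A$ is semi-canonical if $x_1\le x_2\le\cdots\le x_n$ and $y_1\le y_2\le\cdots\le y_m$. *)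

theory Defs
  imports Main
begin

text \<open>An n x m (0,1)-matrix is represented by a function A :: nat => nat => nat
  with 1-based indices; only entries A i j with 1 <= i <= n, 1 <= j <= m matter.\<close>

definition is_binary_matrix :: "nat \<Rightarrow> nat \<Rightarrow> (nat \<Rightarrow> nat \<Rightarrow> nat) \<Rightarrow> bool" where
  "is_binary_matrix n m A \<longleftrightarrow> (\<forall>i\<in>{1..n}. \<forall>j\<in>{1..m}. A i j \<in> {0, 1})"

definition row_val :: "nat \<Rightarrow> (nat \<Rightarrow> nat \<Rightarrow> nat) \<Rightarrow> nat \<Rightarrow> nat" where
  "row_val m A i = (\<Sum>j=1..m. A i j * 2 ^ (m - j))"

definition col_val :: "nat \<Rightarrow> (nat \<Rightarrow> nat \<Rightarrow> nat) \<Rightarrow> nat \<Rightarrow> nat" where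
  "col_val n A j = (\<Sum>i=1..n. A i j * 2 ^ (n - i))"

definition semi_canonical :: "nat \<Rightarrow> nat \<Rightarrow> (nat \<Rightarrow> nat \<Rightarrow> nat) \<Rightarrow> bool" where
  "semi_canonical n m A \<longleftrightarrow> is_binary_matrix n m A
     \<and> (\<forall>i\<in>{1..n}. \<forall>i'\<in>{1..n}. i \<le> i' \<longrightarrow> row_val m A i \<le> row_val m A i')
     \<and> (\<forall>j\<in>{1..m}. \<forall>j'\<in>{1..m}. j \<le> j' \<longrightarrow> col_val n A j \<le> col_val n A j')"

end

theory Submission
  imports Defs
begin

lemma sum_split_first:
  "(\<Sum>i=1..Suc n. f i * (2::nat) ^ (Suc n - i)) = f 1 * 2^n + (\<Sum>i=1..n. f (Suc i) * 2 ^ (n - i))"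
proof -
  have "{1..Suc n} = insert 1 {Suc 1..Suc n}" by auto
  hence "(\<Sum>i=1..Suc n. f i * (2::nat) ^ (Suc n - i)) = f 1 * 2^n + (\<Sum>i=Suc 1..Suc n. f i * 2 ^ (Suc n - i))"
    by simp
  also have "(\<Sum>i=Suc 1..Suc n. f i * (2::nat) ^ (Suc n - i)) = (\<Sum>i=1..n. f (Suc i) * 2 ^ (Suc n - Suc i))"
    by (rule sum.shift_bounds_cl_Suc_ivl)
  finally show ?thesis by simp
qed

lemma sum_bound:
  "(\<forall>i\<in>{1..n}. f i \<le> 1) \<Longrightarrow> (\<Sum>i=1..n. f i * (2::nat) ^ (n - i)) < 2^n"
proof (induction n arbitrary: f)
  case 0 then show ?case by simp
next
  case (Suc n)
  have "(\<forall>i\<in>{1..n}. f (Suc i) \<le> 1)" using Suc.prems by auto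
  hence a: "(\<Sum>i=1..n. f (Suc i) * (2::nat) ^ (n - i)) < 2^n" using Suc.IH[of "\<lambda>i. f (Suc i)"] by simp
  have "f 1 \<le> 1" using Suc.prems by auto
  hence b: "f 1 * (2::nat)^n \<le> 2^n" by simp
  have c: "f 1 * (2::nat)^n + (\<Sum>i=1..n. f (Suc i) * (2::nat) ^ (n - i)) < 2^Suc n" using a b unfolding power_Suc by linarith
  show ?case unfolding sum_split_first by (rule c)
qed

lemma top_bit:
  assumes "\<forall>i\<in>{1..Suc n}. f i \<le> 1"
  shows "(\<Sum>i=1..Suc n. f i * (2::nat) ^ (Suc n - i)) \<ge> 2^n \<longleftrightarrow> f 1 = 1"
proof -
  have "(\<forall>i\<in>{1..n}. f (Suc i) \<le> 1)" using assms by auto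
  hence a: "(\<Sum>i=1..n. f (Suc i) * (2::nat) ^ (n - i)) < 2^n" using sum_bound[of n "\<lambda>i. f (Suc i)"] by simp
  have "f 1 \<le> 1" using assms by auto
  hence "f 1 = 0 \<or> f 1 = 1" by auto
  with a show ?thesis unfolding sum_split_first by auto
qed

lemma mono01:
  fixes m :: nat and g :: "nat \<Rightarrow> nat"
  assumes "\<forall>k\<in>{1..m}. g k \<in> {0,1::nat}"
    and "\<forall>k\<in>{1..m}. \<forall>k'\<in>{1..m}. k \<le> k' \<longrightarrow> g k = 1 \<longrightarrow> g k' = 1"
  shows "\<exists>j\<le>m. (\<forall>k\<in>{1..j}. g k = 0) \<and> (\<forall>k\<in>{j+1..m}. g k = 1)"
  using assms
proof (induction m)
  case 0 then show ?case by auto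
next
  case (Suc m)
  have "\<forall>k\<in>{1..m}. g k \<in> {0,1::nat}" "\<forall>k\<in>{1..m}. \<forall>k'\<in>{1..m}. k \<le> k' \<longrightarrow> g k = 1 \<longrightarrow> g k' = 1"
    using Suc.prems(1) apply simp using Suc.prems(2) by (meson atLeastAtMost_iff le_SucI)
  then obtain j where j: "j \<le> m" "\<forall>k\<in>{1..j}. g k = 0" "\<forall>k\<in>{j+1..m}. g k = 1"
    using Suc.IH by blast
  show ?case
  proof (cases "j = m")
    case True
    have "g (Suc m) = 0 \<or> g (Suc m) = 1" using Suc.prems(1) by auto
    then show ?thesis
    proof
      assume "g (Suc m) = 0"
      then show ?thesis using j True by (rule_tac x="Suc m" in exI) (auto simp: le_Suc_eq)
    next
      assume "g (Suc m) = 1"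
      then show ?thesis using j True by (rule_tac x="m" in exI) (auto)
    qed
  next
    case False
    hence "g m = 1" "m \<ge> 1" using j by auto
    moreover have "m \<in> {1..Suc m}" "Suc m \<in> {1..Suc m}" "m \<le> Suc m" using \<open>m \<ge> 1\<close> by auto
    ultimately have "g (Suc m) = 1" using Suc.prems(2) by blast
    then show ?thesis using j False by (rule_tac x="j" in exI) (auto simp: le_Suc_eq)
  qed
qed

theorem proposition3:
  fixes n m :: nat and A :: "nat \<Rightarrow> nat \<Rightarrow> nat"
  assumes "n \<ge> 1" and "m \<ge> 1"
    and "semi_canonical n m A"
  shows "\<exists>i j. i \<le> n \<and> j \<le> m
     \<and> (\<forall>k\<in>{1..j}. A 1 k = 0) \<and> (\<forall>k\<in>{j+1..m}. A 1 k = 1)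
     \<and> (\<forall>k\<in>{1..i}. A k 1 = 0) \<and> (\<forall>k\<in>{i+1..n}. A k 1 = 1)"
proof -
  have bin: "\<forall>i\<in>{1..n}. \<forall>j\<in>{1..m}. A i j \<in> {0, 1}"
    using assms(3) unfolding semi_canonical_def is_binary_matrix_def by blast
  have rows: "\<forall>i\<in>{1..n}. \<forall>i'\<in>{1..n}. i \<le> i' \<longrightarrow> row_val m A i \<le> row_val m A i'"
   and cols: "\<forall>j\<in>{1..m}. \<forall>j'\<in>{1..m}. j \<le> j' \<longrightarrow> col_val n A j \<le> col_val n A j'"
    using assms(3) unfolding semi_canonical_def by blast+
  obtain n' where n': "n = Suc n'" using assms(1) by (cases n) auto
  obtain m' where m': "m = Suc m'" using assms(2) by (cases m) auto
  have colkey: "col_val n A j \<ge> 2^n' \<longleftrightarrow> A 1 j = 1" if "j \<in> {1..m}" for j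
  proof -
    have "\<forall>i\<in>{1..Suc n'}. A i j \<le> 1" using bin that n' by fastforce
    from top_bit[OF this] show ?thesis unfolding col_val_def n' .
  qed
  have rowkey: "row_val m A i \<ge> 2^m' \<longleftrightarrow> A i 1 = 1" if "i \<in> {1..n}" for i
  proof -
    have "\<forall>j\<in>{1..Suc m'}. A i j \<le> 1" using bin that m' by fastforce
    from top_bit[OF this, of ] show ?thesis unfolding row_val_def m' .
  qed
  have "\<exists>j\<le>m. (\<forall>k\<in>{1..j}. A 1 k = 0) \<and> (\<forall>k\<in>{j+1..m}. A 1 k = 1)"
  proof (rule mono01)
    show "\<forall>k\<in>{1..m}. A 1 k \<in> {0,1::nat}" using bin assms(1) by auto
    show "\<forall>k\<in>{1..m}. \<forall>k'\<in>{1..m}. k \<le> k' \<longrightarrow> A 1 k = 1 \<longrightarrow> A 1 k' = 1"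
    proof (intro ballI impI)
      fix k k' assume h: "k \<in> {1..m}" "k' \<in> {1..m}" "k \<le> k'" "A 1 k = 1"
      hence "col_val n A k \<ge> 2^n'" using colkey by blast
      moreover have "col_val n A k \<le> col_val n A k'" using cols h by blast
      ultimately show "A 1 k' = 1" using colkey[OF h(2)] by linarith
    qed
  qed
  moreover have "\<exists>i\<le>n. (\<forall>k\<in>{1..i}. A k 1 = 0) \<and> (\<forall>k\<in>{i+1..n}. A k 1 = 1)"
  proof (rule mono01)
    show "\<forall>k\<in>{1..n}. A k 1 \<in> {0,1::nat}" using bin assms(2) by auto
    show "\<forall>k\<in>{1..n}. \<forall>k'\<in>{1..n}. k \<le> k' \<longrightarrow> A k 1 = 1 \<longrightarrow> A k' 1 = 1"
    proof (intro ballI impI)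
      fix k k' assume h: "k \<in> {1..n}" "k' \<in> {1..n}" "k \<le> k'" "A k 1 = 1"
      hence "row_val m A k \<ge> 2^m'" using rowkey by blast
      moreover have "row_val m A k \<le> row_val m A k'" using rows h by blast
      ultimately show "A k' 1 = 1" using rowkey[OF h(2)] by linarith
    qed
  qed
  ultimately show ?thesis by blast
qed

end
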